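(* Let $(\Omega,+)$ be a group and $a,b,c$ subgroups such that $a\top b$ and $a,b$ commute elementwise. Then $(a,b,c)$ is a transversal triple (i.e. additionally $b\top c$ and $c\top a$) if and only if there is a group isomorphism $\Omega\cong a\times a$ under which $a$ corresponds to the first factor, $b$ to the second factor and $c$ to the diagonal. Moreover, in this case, the set $U'_{ab}:=U_{ab}\cap\mathit{Gras}(\Omega)$ is a torsor (subtorsor of $U_{ab}$) which, taking $c$ as base point, is isomorphic to the group $\mathrm{Aut}(a)$ of group automorphisms of $a$.
   Context: $(\Omega,+)$ is a group written additively but not necessarily abelian; $\mathit{Gras}(\Omega)$ is the set of subgroups. For subsets $x,y$, $x\top y$ means every $\omega\in\Omega$ has a unique decomposition $\omega=\xi+\eta$ with $\xi\in x,\eta\in y$. $U_{ab}$ is the set $\{x\subseteq\Omega: a\top x,\ x\top b\}$ with the torsor law $(x,y,z)\mapsto\Gamma(x,a,y,b,z)$, where $\Gamma(x,a,y,b,z)=\{\omega:\exists\alpha\in a,\beta\in b:\ \alpha+\omega+\beta\in y,\ \alpha+\omega\in z,\ \omega+\beta\in x\}$. A torsor with base point $c$ is regarded as the group with product $xz:=\Gamma(x,a,c,b,z)$ and neutral element $c$. *)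

theory Defs
  imports "HOL-Algebra.Bij"
begin

text \<open>The group Omega is a HOL-Algebra group G (multiplicative notation stands for
the paper's additive notation; no commutativity assumed).\<close>

definition transv :: "('g, 'm) monoid_scheme \<Rightarrow> 'g set \<Rightarrow> 'g set \<Rightarrow> bool" where
  "transv G x y \<longleftrightarrow>
     (\<forall>\<omega>\<in>carrier G. \<exists>!p. fst p \<in> x \<and> snd p \<in> y \<and> \<omega> = fst p \<otimes>\<^bsub>G\<^esub> snd p)"

definition Gamma :: "('g, 'm) monoid_scheme \<Rightarrow> 'g set \<Rightarrow> 'g set \<Rightarrow> 'g set \<Rightarrow> 'g set \<Rightarrow> 'g set \<Rightarrow> 'g set" where
  "Gamma G x a y b z = {\<omega> \<in> carrier G. \<exists>\<alpha>\<in>a. \<exists>\<beta>\<in>b.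
      \<alpha> \<otimes>\<^bsub>G\<^esub> \<omega> \<otimes>\<^bsub>G\<^esub> \<beta> \<in> y \<and> \<alpha> \<otimes>\<^bsub>G\<^esub> \<omega> \<in> z \<and> \<omega> \<otimes>\<^bsub>G\<^esub> \<beta> \<in> x}"

definition Uab :: "('g, 'm) monoid_scheme \<Rightarrow> 'g set \<Rightarrow> 'g set \<Rightarrow> 'g set set" where
  "Uab G a b = {x. x \<subseteq> carrier G \<and> transv G a x \<and> transv G x b}"

definition Gras :: "('g, 'm) monoid_scheme \<Rightarrow> 'g set set" where
  "Gras G = {x. subgroup x G}"

definition torsor :: "'t set \<Rightarrow> ('t \<Rightarrow> 't \<Rightarrow> 't \<Rightarrow> 't) \<Rightarrow> bool" where
  "torsor T m \<longleftrightarrow> T \<noteq> {}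
     \<and> (\<forall>x\<in>T. \<forall>y\<in>T. \<forall>z\<in>T. m x y z \<in> T)
     \<and> (\<forall>x\<in>T. \<forall>y\<in>T. m x x y = y \<and> m x y y = x)
     \<and> (\<forall>x\<in>T. \<forall>y\<in>T. \<forall>z\<in>T. \<forall>u\<in>T. \<forall>v\<in>T.
          m (m x y z) u v = m x y (m z u v) \<and> m x y (m z u v) = m x (m u z y) v)"

definition Ulaw :: "('g, 'm) monoid_scheme \<Rightarrow> 'g set \<Rightarrow> 'g set \<Rightarrow> 'g set \<Rightarrow> 'g set \<Rightarrow> 'g set \<Rightarrow> 'g set" where
  "Ulaw G a b x y z = Gamma G x a y b z"

definition torsor_group :: "'t set \<Rightarrow> ('t \<Rightarrow> 't \<Rightarrow> 't \<Rightarrow> 't) \<Rightarrow> 't \<Rightarrow> 't monoid" where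
  "torsor_group T m c = \<lparr>carrier = T, mult = (\<lambda>x z. m x c z), one = c\<rparr>"

end

theory Submission
  imports Defs
begin

lemma (in group) inv_cancel1 [simp]:
  "x \<in> carrier G \<Longrightarrow> y \<in> carrier G \<Longrightarrow> inv x \<otimes> (x \<otimes> y) = y"
  by (simp add: m_assoc[symmetric])
lemma (in group) inv_cancel2 [simp]:
  "x \<in> carrier G \<Longrightarrow> y \<in> carrier G \<Longrightarrow> x \<otimes> (inv x \<otimes> y) = y"
  by (simp add: m_assoc[symmetric])

lemma (in group) solve_r:
  assumes "x \<in> carrier G" "y \<in> carrier G" "z \<in> carrier G"
  shows "(x \<otimes> y = z) \<longleftrightarrow> (x = z \<otimes> inv y)"
proof
  assume "x \<otimes> y = z"
  then have "x \<otimes> y \<otimes> inv y = z \<otimes> inv y" by simp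
  then show "x = z \<otimes> inv y" using assms by (simp add: m_assoc)
next
  assume "x = z \<otimes> inv y"
  then show "x \<otimes> y = z" using assms by (simp add: m_assoc)
qed
lemma (in group) solve_l:
  assumes "x \<in> carrier G" "y \<in> carrier G" "z \<in> carrier G"
  shows "(x \<otimes> y = z) \<longleftrightarrow> (y = inv x \<otimes> z)"
proof
  assume "x \<otimes> y = z"
  then have "inv x \<otimes> (x \<otimes> y) = inv x \<otimes> z" by simp
  then show "y = inv x \<otimes> z" using assms by (simp add: m_assoc[symmetric])
next
  assume "y = inv x \<otimes> z"
  then show "x \<otimes> y = z" using assms by (simp add: m_assoc[symmetric])
qed
lemma (in group) inv_mult_one:
  "x \<in> carrier G \<Longrightarrow> y \<in> carrier G \<Longrightarrow> (inv x \<otimes> y = \<one>) \<longleftrightarrow> (x = y)"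
  using solve_l[of "inv x" y "\<one>"] by auto
lemma (in group) mult_inv_one:
  "x \<in> carrier G \<Longrightarrow> y \<in> carrier G \<Longrightarrow> (x \<otimes> inv y = \<one>) \<longleftrightarrow> (x = y)"
  using solve_r[of x "inv y" "\<one>"] by auto

lemma (in group) transv_iff:
  assumes x: "subgroup x G" and y: "subgroup y G"
  shows "transv G x y \<longleftrightarrow> (x \<inter> y \<subseteq> {\<one>}) \<and> (\<forall>\<omega>\<in>carrier G. \<exists>\<xi>\<in>x. \<exists>\<eta>\<in>y. \<omega> = \<xi> \<otimes> \<eta>)"
proof
  assume T: "transv G x y"
  have "\<forall>\<omega>\<in>carrier G. \<exists>\<xi>\<in>x. \<exists>\<eta>\<in>y. \<omega> = \<xi> \<otimes> \<eta>"
    using T unfolding transv_def by (metis (no_types, lifting))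
  moreover have "x \<inter> y \<subseteq> {\<one>}"
  proof
    fix z assume z: "z \<in> x \<inter> y"
    have zc: "z \<in> carrier G" using z subgroup.mem_carrier[OF x] by auto
    have u: "\<exists>!p. fst p \<in> x \<and> snd p \<in> y \<and> \<one> = fst p \<otimes> snd p"
      using T unfolding transv_def by auto
    have P1: "fst (z, inv z) \<in> x \<and> snd (z, inv z) \<in> y \<and> \<one> = fst (z, inv z) \<otimes> snd (z, inv z)"
      using z zc subgroup.m_inv_closed[OF y] by auto
    have P2: "fst (\<one>, \<one>) \<in> x \<and> snd (\<one>, \<one>) \<in> y \<and> \<one> = fst (\<one>::'a, \<one>::'a) \<otimes> snd (\<one>::'a, \<one>::'a)"
      using subgroup.one_closed[OF x] subgroup.one_closed[OF y] by auto
    have "(z, inv z) = (\<one>, \<one>)" using u P1 P2 by blast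
    then show "z \<in> {\<one>}" by simp
  qed
  ultimately show "(x \<inter> y \<subseteq> {\<one>}) \<and> (\<forall>\<omega>\<in>carrier G. \<exists>\<xi>\<in>x. \<exists>\<eta>\<in>y. \<omega> = \<xi> \<otimes> \<eta>)" by blast
next
  assume H: "(x \<inter> y \<subseteq> {\<one>}) \<and> (\<forall>\<omega>\<in>carrier G. \<exists>\<xi>\<in>x. \<exists>\<eta>\<in>y. \<omega> = \<xi> \<otimes> \<eta>)"
  show "transv G x y"
    unfolding transv_def
  proof
    fix \<omega> assume w: "\<omega> \<in> carrier G"
    then obtain \<xi> \<eta> where e: "\<xi> \<in> x" "\<eta> \<in> y" "\<omega> = \<xi> \<otimes> \<eta>" using H by blast
    show "\<exists>!p. fst p \<in> x \<and> snd p \<in> y \<and> \<omega> = fst p \<otimes> snd p"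
    proof (rule ex1I[of _ "(\<xi>, \<eta>)"])
      show "fst (\<xi>, \<eta>) \<in> x \<and> snd (\<xi>, \<eta>) \<in> y \<and> \<omega> = fst (\<xi>, \<eta>) \<otimes> snd (\<xi>, \<eta>)" using e by simp
    next
      fix p assume p: "fst p \<in> x \<and> snd p \<in> y \<and> \<omega> = fst p \<otimes> snd p"
      obtain \<xi>' \<eta>' where pp: "p = (\<xi>', \<eta>')" by (cases p)
      have m: "\<xi>' \<in> x" "\<eta>' \<in> y" "\<xi> \<otimes> \<eta> = \<xi>' \<otimes> \<eta>'" using p e pp by auto
      have c: "\<xi> \<in> carrier G" "\<eta> \<in> carrier G" "\<xi>' \<in> carrier G" "\<eta>' \<in> carrier G"
        using m e subgroup.mem_carrier[OF x] subgroup.mem_carrier[OF y] by auto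
      have eq: "inv \<xi>' \<otimes> \<xi> = \<eta>' \<otimes> inv \<eta>"
      proof -
        have "\<xi> \<otimes> \<eta> \<otimes> inv \<eta> = \<xi>' \<otimes> \<eta>' \<otimes> inv \<eta>" using m by simp
        then have "\<xi> = \<xi>' \<otimes> (\<eta>' \<otimes> inv \<eta>)" using c by (simp add: m_assoc)
        then show ?thesis using c by (simp add: solve_l[symmetric])
      qed
      have "inv \<xi>' \<otimes> \<xi> \<in> x" using m e x by (simp add: subgroup.m_closed subgroup.m_inv_closed)
      moreover have "\<eta>' \<otimes> inv \<eta> \<in> y" using m e y by (simp add: subgroup.m_closed subgroup.m_inv_closed)
      ultimately have "inv \<xi>' \<otimes> \<xi> = \<one>" using eq H by auto
      then have "\<xi> = \<xi>'" using c by (simp add: inv_mult_one)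
      moreover have "\<eta>' \<otimes> inv \<eta> = \<one>" using eq \<open>inv \<xi>' \<otimes> \<xi> = \<one>\<close> by simp
      then have "\<eta>' = \<eta>" using c by (simp add: mult_inv_one)
      ultimately show "p = (\<xi>, \<eta>)" using pp by simp
    qed
  qed
qed


lemma (in group) transv_sym:
  assumes x: "subgroup x G" and y: "subgroup y G" and T: "transv G x y"
  shows "transv G y x"
proof -
  have H: "(x \<inter> y \<subseteq> {\<one>}) \<and> (\<forall>\<omega>\<in>carrier G. \<exists>\<xi>\<in>x. \<exists>\<eta>\<in>y. \<omega> = \<xi> \<otimes> \<eta>)"
    using transv_iff[OF x y] T by blast
  have "\<forall>\<omega>\<in>carrier G. \<exists>\<eta>\<in>y. \<exists>\<xi>\<in>x. \<omega> = \<eta> \<otimes> \<xi>"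
  proof
    fix \<omega> assume w: "\<omega> \<in> carrier G"
    then obtain \<xi> \<eta> where e: "\<xi> \<in> x" "\<eta> \<in> y" "inv \<omega> = \<xi> \<otimes> \<eta>" using H by blast
    have c: "\<xi> \<in> carrier G" "\<eta> \<in> carrier G" using e subgroup.mem_carrier[OF x] subgroup.mem_carrier[OF y] by auto
    have "\<omega> = inv (inv \<omega>)" using w by simp
    also have "\<dots> = inv \<eta> \<otimes> inv \<xi>" using e c by (simp add: inv_mult_group)
    finally have "\<omega> = inv \<eta> \<otimes> inv \<xi>" .
    moreover have "inv \<eta> \<in> y" "inv \<xi> \<in> x" using e subgroup.m_inv_closed[OF x] subgroup.m_inv_closed[OF y] by auto
    ultimately show "\<exists>\<eta>\<in>y. \<exists>\<xi>\<in>x. \<omega> = \<eta> \<otimes> \<xi>" by blast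
  qed
  then show ?thesis using transv_iff[OF y x] H by blast
qed

lemma (in group) converse_dir:
  fixes \<phi> a b c
  assumes sa: "subgroup a G" and sb: "subgroup b G" and sc: "subgroup c G"
    and iso: "\<phi> \<in> iso G (G\<lparr>carrier := a\<rparr> \<times>\<times> G\<lparr>carrier := a\<rparr>)"
    and fa: "\<phi> ` a = a \<times> {\<one>}" and fb: "\<phi> ` b = {\<one>} \<times> a"
    and fc: "\<phi> ` c = {(x, x) | x. x \<in> a}"
  shows "transv G b c \<and> transv G c a"
proof -
  have hom: "\<And>x y. x \<in> carrier G \<Longrightarrow> y \<in> carrier G \<Longrightarrow> \<phi> (x \<otimes> y) = \<phi> x \<otimes>\<^bsub>G\<lparr>carrier := a\<rparr> \<times>\<times> G\<lparr>carrier := a\<rparr>\<^esub> \<phi> y"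
    by (rule hom_mult[OF iso_imp_homomorphism[OF iso]])
  have into: "\<And>x. x \<in> carrier G \<Longrightarrow> \<phi> x \<in> a \<times> a"
    using hom_in_carrier[OF iso_imp_homomorphism[OF iso]] by simp
  have inj: "inj_on \<phi> (carrier G)" using iso by (simp only: iso_iff)
  have ca: "\<And>z. z \<in> a \<Longrightarrow> z \<in> carrier G" using subgroup.mem_carrier[OF sa] by blast
  have cb: "\<And>z. z \<in> b \<Longrightarrow> z \<in> carrier G" using subgroup.mem_carrier[OF sb] by blast
  have cc: "\<And>z. z \<in> c \<Longrightarrow> z \<in> carrier G" using subgroup.mem_carrier[OF sc] by blast
  have one: "\<phi> \<one> = (\<one>, \<one>)"
  proof -
    have "\<phi> \<one> \<in> {\<one>} \<times> a" using fb subgroup.one_closed[OF sb] by blast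
    moreover have "\<phi> \<one> \<in> {(x, x) | x. x \<in> a}" using fc subgroup.one_closed[OF sc] by blast
    ultimately show ?thesis by auto
  qed
  have int: "\<And>x. subgroup x G \<Longrightarrow> \<phi> ` x \<inter> \<phi> ` c \<subseteq> {(\<one>, \<one>)} \<Longrightarrow> x \<inter> c \<subseteq> {\<one>}"
  proof
    fix x z assume x: "subgroup x G" and h: "\<phi> ` x \<inter> \<phi> ` c \<subseteq> {(\<one>, \<one>)}" and z: "z \<in> x \<inter> c"
    have "\<phi> z \<in> \<phi> ` x \<inter> \<phi> ` c" using z by blast
    then have "\<phi> z = \<phi> \<one>" using one h by auto
    then have "z = \<one>" using z cc by (intro inj_onD[OF inj]) auto
    then show "z \<in> {\<one>}" by simp
  qed
  have bc1: "b \<inter> c \<subseteq> {\<one>}" by (rule int[OF sb]) (auto simp: fb fc)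
  have sub: "\<And>p. p \<in> a \<Longrightarrow> p \<in> carrier G" using ca .
  have bc2: "\<forall>\<omega>\<in>carrier G. \<exists>\<xi>\<in>b. \<exists>\<eta>\<in>c. \<omega> = \<xi> \<otimes> \<eta>"
  proof
    fix \<omega> assume w: "\<omega> \<in> carrier G"
    obtain p q where pq: "\<phi> \<omega> = (p, q)" "p \<in> a" "q \<in> a" using into[OF w] by auto
    have "(\<one>, q \<otimes> inv p) \<in> \<phi> ` b" unfolding fb using pq sa
      by (simp add: subgroup.m_closed subgroup.m_inv_closed)
    then obtain \<beta> where be: "\<beta> \<in> b" "\<phi> \<beta> = (\<one>, q \<otimes> inv p)" by auto
    have "(p, p) \<in> \<phi> ` c" unfolding fc using pq by blast
    then obtain \<gamma> where ga: "\<gamma> \<in> c" "\<phi> \<gamma> = (p, p)" by auto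
    have pc: "p \<in> carrier G" "q \<in> carrier G" using pq sub by auto
    have "\<phi> (\<beta> \<otimes> \<gamma>) = (\<one> \<otimes> p, q \<otimes> inv p \<otimes> p)" using hom[OF cb[OF be(1)] cc[OF ga(1)]] be ga
      by simp
    also have "\<dots> = (p, q)" using pc by (simp add: m_assoc)
    finally have "\<phi> (\<beta> \<otimes> \<gamma>) = (p, q)" .
    then have "\<beta> \<otimes> \<gamma> = \<omega>" using pq w be ga cb cc by (intro inj_onD[OF inj]) auto
    then show "\<exists>\<xi>\<in>b. \<exists>\<eta>\<in>c. \<omega> = \<xi> \<otimes> \<eta>" using be ga by blast
  qed
  have ca1: "c \<inter> a \<subseteq> {\<one>}"
  proof -
    have "a \<inter> c \<subseteq> {\<one>}" by (rule int[OF sa]) (auto simp: fa fc)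
    then show ?thesis by blast
  qed
  have ca2: "\<forall>\<omega>\<in>carrier G. \<exists>\<xi>\<in>c. \<exists>\<eta>\<in>a. \<omega> = \<xi> \<otimes> \<eta>"
  proof
    fix \<omega> assume w: "\<omega> \<in> carrier G"
    obtain p q where pq: "\<phi> \<omega> = (p, q)" "p \<in> a" "q \<in> a" using into[OF w] by auto
    have "(inv q \<otimes> p, \<one>) \<in> \<phi> ` a" unfolding fa using pq sa
      by (simp add: subgroup.m_closed subgroup.m_inv_closed)
    then obtain \<alpha> where al: "\<alpha> \<in> a" "\<phi> \<alpha> = (inv q \<otimes> p, \<one>)" by auto
    have "(q, q) \<in> \<phi> ` c" unfolding fc using pq by blast
    then obtain \<gamma> where ga: "\<gamma> \<in> c" "\<phi> \<gamma> = (q, q)" by auto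
    have pc: "p \<in> carrier G" "q \<in> carrier G" using pq sub by auto
    have "\<phi> (\<gamma> \<otimes> \<alpha>) = (q \<otimes> (inv q \<otimes> p), q \<otimes> \<one>)" using hom[OF cc[OF ga(1)] ca[OF al(1)]] al ga
      by simp
    also have "\<dots> = (p, q)" using pc by simp
    finally have "\<phi> (\<gamma> \<otimes> \<alpha>) = (p, q)" .
    then have "\<gamma> \<otimes> \<alpha> = \<omega>" using pq w al ga ca cc by (intro inj_onD[OF inj]) auto
    then show "\<exists>\<xi>\<in>c. \<exists>\<eta>\<in>a. \<omega> = \<xi> \<otimes> \<eta>" using al ga by blast
  qed
  show ?thesis using transv_iff[OF sb sc] transv_iff[OF sc sa] bc1 bc2 ca1 ca2 by blast
qed

definition hb :: "('g, 'm) monoid_scheme \<Rightarrow> 'g set \<Rightarrow> 'g set \<Rightarrow> ('g \<Rightarrow> 'g) \<Rightarrow> bool" where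
  "hb G S T f \<longleftrightarrow> f ` S = T \<and> inj_on f S \<and> (\<forall>x\<in>S. \<forall>y\<in>S. f (x \<otimes>\<^bsub>G\<^esub> y) = f x \<otimes>\<^bsub>G\<^esub> f y)"

lemma hb_comp:
  assumes f: "hb G S T f" and g: "hb G T U g" shows "hb G S U (\<lambda>x. g (f x))"
proof -
  have f1: "f ` S = T" "inj_on f S" "\<forall>x\<in>S. \<forall>y\<in>S. f (x \<otimes>\<^bsub>G\<^esub> y) = f x \<otimes>\<^bsub>G\<^esub> f y"
    using f unfolding hb_def by auto
  have g1: "g ` T = U" "inj_on g T" "\<forall>x\<in>T. \<forall>y\<in>T. g (x \<otimes>\<^bsub>G\<^esub> y) = g x \<otimes>\<^bsub>G\<^esub> g y"
    using g unfolding hb_def by auto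
  have "(\<lambda>x. g (f x)) ` S = U" using f1 g1 by (simp add: image_image[of g f S, symmetric])
  moreover have "inj_on (\<lambda>x. g (f x)) S" using f1 g1 comp_inj_on[of f S g] by (simp add: o_def)
  moreover have "\<forall>x\<in>S. \<forall>y\<in>S. g (f (x \<otimes>\<^bsub>G\<^esub> y)) = g (f x) \<otimes>\<^bsub>G\<^esub> g (f y)"
    using f1 g1 by auto
  ultimately show ?thesis unfolding hb_def by blast
qed

lemma hb_inv:
  assumes h: "hb G S T f" and cl: "\<forall>x\<in>S. \<forall>y\<in>S. x \<otimes>\<^bsub>G\<^esub> y \<in> S"
  shows "hb G T S (inv_into S f)"
proof -
  have im: "f ` S = T" and inj: "inj_on f S" and hm: "\<forall>x\<in>S. \<forall>y\<in>S. f (x \<otimes>\<^bsub>G\<^esub> y) = f x \<otimes>\<^bsub>G\<^esub> f y"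
    using h unfolding hb_def by auto
  have bij: "bij_betw f S T" using im inj by (simp add: bij_betw_def)
  have "inv_into S f ` T = S" using bij by (metis bij_betw_def bij_betw_inv_into)
  moreover have "inj_on (inv_into S f) T" using im by (metis inj_on_inv_into subset_refl)
  moreover have "\<forall>x\<in>T. \<forall>y\<in>T. inv_into S f (x \<otimes>\<^bsub>G\<^esub> y) = inv_into S f x \<otimes>\<^bsub>G\<^esub> inv_into S f y"
  proof (intro ballI)
    fix x y assume x: "x \<in> T" and y: "y \<in> T"
    have ix: "inv_into S f x \<in> S" "f (inv_into S f x) = x" using x im by (auto intro: inv_into_into f_inv_into_f)
    have iy: "inv_into S f y \<in> S" "f (inv_into S f y) = y" using y im by (auto intro: inv_into_into f_inv_into_f)
    have "f (inv_into S f x \<otimes>\<^bsub>G\<^esub> inv_into S f y) = x \<otimes>\<^bsub>G\<^esub> y" using hm ix iy by simp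
    moreover have "inv_into S f x \<otimes>\<^bsub>G\<^esub> inv_into S f y \<in> S" using cl ix iy by simp
    ultimately show "inv_into S f (x \<otimes>\<^bsub>G\<^esub> y) = inv_into S f x \<otimes>\<^bsub>G\<^esub> inv_into S f y"
      using inj by (metis inv_into_f_f)
  qed
  ultimately show ?thesis unfolding hb_def by blast
qed

lemma hb_inv_facts:
  assumes h: "hb G S T f"
  shows "\<And>x. x \<in> T \<Longrightarrow> inv_into S f x \<in> S" "\<And>x. x \<in> T \<Longrightarrow> f (inv_into S f x) = x"
    "\<And>x. x \<in> S \<Longrightarrow> inv_into S f (f x) = x" "\<And>x. x \<in> S \<Longrightarrow> f x \<in> T"
  using h unfolding hb_def by (auto intro: inv_into_into f_inv_into_f inv_into_f_f)


locale twosub = group G for G (structure) +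
  fixes a b :: "'a set"
  assumes sa: "subgroup a G" and sb: "subgroup b G" and tab: "transv G a b"
    and comm: "\<forall>\<alpha>\<in>a. \<forall>\<beta>\<in>b. \<alpha> \<otimes> \<beta> = \<beta> \<otimes> \<alpha>"
begin

lemma ac [simp]: "\<alpha> \<in> a \<Longrightarrow> \<alpha> \<in> carrier G" using subgroup.mem_carrier[OF sa] by blast
lemma bc [simp]: "\<beta> \<in> b \<Longrightarrow> \<beta> \<in> carrier G" using subgroup.mem_carrier[OF sb] by blast
lemma a_mult [simp]: "\<alpha> \<in> a \<Longrightarrow> \<alpha>' \<in> a \<Longrightarrow> \<alpha> \<otimes> \<alpha>' \<in> a" using subgroup.m_closed[OF sa] by blast
lemma b_mult [simp]: "\<beta> \<in> b \<Longrightarrow> \<beta>' \<in> b \<Longrightarrow> \<beta> \<otimes> \<beta>' \<in> b" using subgroup.m_closed[OF sb] by blast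
lemma a_inv [simp]: "\<alpha> \<in> a \<Longrightarrow> inv \<alpha> \<in> a" using subgroup.m_inv_closed[OF sa] by blast
lemma b_inv [simp]: "\<beta> \<in> b \<Longrightarrow> inv \<beta> \<in> b" using subgroup.m_inv_closed[OF sb] by blast
lemma a_one [simp]: "\<one> \<in> a" using subgroup.one_closed[OF sa] by blast
lemma b_one [simp]: "\<one> \<in> b" using subgroup.one_closed[OF sb] by blast

lemma comm': "\<alpha> \<in> a \<Longrightarrow> \<beta> \<in> b \<Longrightarrow> \<alpha> \<otimes> \<beta> = \<beta> \<otimes> \<alpha>" using comm by blast

lemma tab': "a \<inter> b \<subseteq> {\<one>}" "\<forall>\<omega>\<in>carrier G. \<exists>\<xi>\<in>a. \<exists>\<eta>\<in>b. \<omega> = \<xi> \<otimes> \<eta>"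
  using transv_iff[OF sa sb] tab by auto

lemma decomp: "\<omega> \<in> carrier G \<Longrightarrow> \<exists>\<alpha>\<in>a. \<exists>\<beta>\<in>b. \<omega> = \<alpha> \<otimes> \<beta>"
  using tab' by blast

lemma decomp_uniq:
  assumes "\<alpha>1 \<in> a" "\<alpha>2 \<in> a" "\<beta>1 \<in> b" "\<beta>2 \<in> b" "\<alpha>1 \<otimes> \<beta>1 = \<alpha>2 \<otimes> \<beta>2"
  shows "\<alpha>1 = \<alpha>2 \<and> \<beta>1 = \<beta>2"
proof -
  have u: "\<exists>!p. fst p \<in> a \<and> snd p \<in> b \<and> \<alpha>1 \<otimes> \<beta>1 = fst p \<otimes> snd p"
    using tab assms unfolding transv_def by simp
  have P1: "fst (\<alpha>1, \<beta>1) \<in> a \<and> snd (\<alpha>1, \<beta>1) \<in> b \<and> \<alpha>1 \<otimes> \<beta>1 = fst (\<alpha>1, \<beta>1) \<otimes> snd (\<alpha>1, \<beta>1)"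
    using assms by simp
  have P2: "fst (\<alpha>2, \<beta>2) \<in> a \<and> snd (\<alpha>2, \<beta>2) \<in> b \<and> \<alpha>1 \<otimes> \<beta>1 = fst (\<alpha>2, \<beta>2) \<otimes> snd (\<alpha>2, \<beta>2)"
    using assms by simp
  have "(\<alpha>1, \<beta>1) = (\<alpha>2, \<beta>2)" using u P1 P2 by blast
  then show ?thesis by simp
qed

lemma mix: "\<alpha>1 \<in> a \<Longrightarrow> \<alpha>2 \<in> a \<Longrightarrow> \<beta>1 \<in> b \<Longrightarrow> \<beta>2 \<in> b \<Longrightarrow>
  (\<alpha>1 \<otimes> \<beta>1) \<otimes> (\<alpha>2 \<otimes> \<beta>2) = (\<alpha>1 \<otimes> \<alpha>2) \<otimes> (\<beta>1 \<otimes> \<beta>2)"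
proof -
  assume h: "\<alpha>1 \<in> a" "\<alpha>2 \<in> a" "\<beta>1 \<in> b" "\<beta>2 \<in> b"
  have "(\<alpha>1 \<otimes> \<beta>1) \<otimes> (\<alpha>2 \<otimes> \<beta>2) = \<alpha>1 \<otimes> ((\<beta>1 \<otimes> \<alpha>2) \<otimes> \<beta>2)"
    using h by (simp add: m_assoc)
  also have "\<dots> = \<alpha>1 \<otimes> ((\<alpha>2 \<otimes> \<beta>1) \<otimes> \<beta>2)" using h comm'[of \<alpha>2 \<beta>1] by simp
  also have "\<dots> = (\<alpha>1 \<otimes> \<alpha>2) \<otimes> (\<beta>1 \<otimes> \<beta>2)" using h by (simp add: m_assoc)
  finally show ?thesis .
qed

lemma mix_inv: "\<alpha> \<in> a \<Longrightarrow> \<beta> \<in> b \<Longrightarrow> inv (\<alpha> \<otimes> \<beta>) = inv \<alpha> \<otimes> inv \<beta>"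
  using comm'[of "inv \<alpha>" "inv \<beta>"] by (simp add: inv_mult_group)

definition pa where "pa \<omega> = (THE \<alpha>. \<alpha> \<in> a \<and> (\<exists>\<beta>\<in>b. \<omega> = \<alpha> \<otimes> \<beta>))"
definition pb where "pb \<omega> = (THE \<beta>. \<beta> \<in> b \<and> (\<exists>\<alpha>\<in>a. \<omega> = \<alpha> \<otimes> \<beta>))"

lemma pab_eq: assumes "\<alpha> \<in> a" "\<beta> \<in> b" shows "pa (\<alpha> \<otimes> \<beta>) = \<alpha>" "pb (\<alpha> \<otimes> \<beta>) = \<beta>"
proof -
  show "pa (\<alpha> \<otimes> \<beta>) = \<alpha>" unfolding pa_def
    by (rule the_equality) (use assms decomp_uniq in auto)
  show "pb (\<alpha> \<otimes> \<beta>) = \<beta>" unfolding pb_def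
    by (rule the_equality) (use assms decomp_uniq in auto)
qed

lemma pab: assumes "\<omega> \<in> carrier G" shows "pa \<omega> \<in> a" "pb \<omega> \<in> b" "\<omega> = pa \<omega> \<otimes> pb \<omega>"
proof -
  obtain \<alpha> \<beta> where e: "\<alpha> \<in> a" "\<beta> \<in> b" "\<omega> = \<alpha> \<otimes> \<beta>" using decomp[OF assms] by blast
  show "pa \<omega> \<in> a" "pb \<omega> \<in> b" "\<omega> = pa \<omega> \<otimes> pb \<omega>" using e pab_eq by auto
qed

definition U where "U = {x. subgroup x G \<and> transv G a x \<and> transv G x b}"

lemma U_facts:
  assumes "x \<in> U"
  shows "subgroup x G" "a \<inter> x \<subseteq> {\<one>}" "\<forall>\<omega>\<in>carrier G. \<exists>\<xi>\<in>a. \<exists>\<eta>\<in>x. \<omega> = \<xi> \<otimes> \<eta>"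
    "x \<inter> b \<subseteq> {\<one>}" "\<forall>\<omega>\<in>carrier G. \<exists>\<xi>\<in>x. \<exists>\<eta>\<in>b. \<omega> = \<xi> \<otimes> \<eta>"
  using assms transv_iff[OF sa, of x] transv_iff[OF _ sb, of x] unfolding U_def by auto

definition sig where "sig x \<beta> = (THE \<alpha>. \<alpha> \<in> a \<and> \<alpha> \<otimes> \<beta> \<in> x)"

lemma sig_uniq:
  assumes x: "x \<in> U" and "\<beta> \<in> b" "\<alpha>1 \<in> a" "\<alpha>2 \<in> a" "\<alpha>1 \<otimes> \<beta> \<in> x" "\<alpha>2 \<otimes> \<beta> \<in> x"
  shows "\<alpha>1 = \<alpha>2"
proof -
  have sx: "subgroup x G" using U_facts[OF x] by blast
  have "(\<alpha>1 \<otimes> \<beta>) \<otimes> inv (\<alpha>2 \<otimes> \<beta>) \<in> x"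
    using assms subgroup.m_closed[OF sx] subgroup.m_inv_closed[OF sx] by blast
  moreover have "(\<alpha>1 \<otimes> \<beta>) \<otimes> inv (\<alpha>2 \<otimes> \<beta>) = \<alpha>1 \<otimes> inv \<alpha>2"
    using assms by (simp add: inv_mult_group m_assoc)
  moreover have "\<alpha>1 \<otimes> inv \<alpha>2 \<in> a" using assms by simp
  ultimately have "\<alpha>1 \<otimes> inv \<alpha>2 \<in> a \<inter> x" by simp
  then have "\<alpha>1 \<otimes> inv \<alpha>2 = \<one>" using U_facts(2)[OF x] by blast
  then show ?thesis using assms by (simp add: mult_inv_one)
qed

lemma sig:
  assumes x: "x \<in> U" and be: "\<beta> \<in> b"
  shows "sig x \<beta> \<in> a" "sig x \<beta> \<otimes> \<beta> \<in> x"
proof -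
  obtain \<alpha>' \<xi> where e: "\<alpha>' \<in> a" "\<xi> \<in> x" "\<beta> = \<alpha>' \<otimes> \<xi>" using U_facts(3)[OF x] be by fastforce
  have sx: "subgroup x G" using U_facts[OF x] by blast
  have xc: "\<xi> \<in> carrier G" using e subgroup.mem_carrier[OF sx] by blast
  have "inv \<alpha>' \<otimes> \<beta> = \<xi>" using e xc by simp
  then have ex: "inv \<alpha>' \<in> a \<and> inv \<alpha>' \<otimes> \<beta> \<in> x" using e by simp
  have "sig x \<beta> \<in> a \<and> sig x \<beta> \<otimes> \<beta> \<in> x" unfolding sig_def
    by (rule theI[of _ "inv \<alpha>'"]) (use ex sig_uniq[OF x be] in blast)+
  then show "sig x \<beta> \<in> a" "sig x \<beta> \<otimes> \<beta> \<in> x" by auto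
qed

lemma sig_eq: "x \<in> U \<Longrightarrow> \<beta> \<in> b \<Longrightarrow> \<alpha> \<in> a \<Longrightarrow> \<alpha> \<otimes> \<beta> \<in> x \<Longrightarrow> sig x \<beta> = \<alpha>"
  using sig sig_uniq by blast

lemma x_graph: assumes x: "x \<in> U" and xi: "\<xi> \<in> x" shows "\<exists>\<beta>\<in>b. \<xi> = sig x \<beta> \<otimes> \<beta>"
proof -
  have "\<xi> \<in> carrier G" using subgroup.mem_carrier[OF U_facts(1)[OF x]] xi by blast
  then obtain \<alpha> \<beta> where e: "\<alpha> \<in> a" "\<beta> \<in> b" "\<xi> = \<alpha> \<otimes> \<beta>" using decomp by blast
  then have "sig x \<beta> = \<alpha>" by (intro sig_eq[OF x]) (use e xi in simp_all)
  then show ?thesis using e by blast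
qed

lemma U_ext: assumes x: "x \<in> U" and y: "y \<in> U" and eq: "\<forall>\<beta>\<in>b. sig x \<beta> = sig y \<beta>" shows "x = y"
proof -
  have "x \<subseteq> y" using x_graph[OF x] sig[OF y] eq by fastforce
  moreover have "y \<subseteq> x" using x_graph[OF y] sig[OF x] eq by fastforce
  ultimately show ?thesis by blast
qed

lemma sig_hb: assumes x: "x \<in> U" shows "hb G b a (sig x)"
proof -
  have sx: "subgroup x G" using U_facts[OF x] by blast
  have hom: "\<forall>\<beta>1\<in>b. \<forall>\<beta>2\<in>b. sig x (\<beta>1 \<otimes> \<beta>2) = sig x \<beta>1 \<otimes> sig x \<beta>2"
  proof (intro ballI)
    fix \<beta>1 \<beta>2 assume b1: "\<beta>1 \<in> b" and b2: "\<beta>2 \<in> b"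
    have "(sig x \<beta>1 \<otimes> \<beta>1) \<otimes> (sig x \<beta>2 \<otimes> \<beta>2) \<in> x"
      using sig[OF x b1] sig[OF x b2] subgroup.m_closed[OF sx] by blast
    then have P: "(sig x \<beta>1 \<otimes> sig x \<beta>2) \<otimes> (\<beta>1 \<otimes> \<beta>2) \<in> x"
      using mix[OF sig(1)[OF x b1] sig(1)[OF x b2] b1 b2] by simp
    show "sig x (\<beta>1 \<otimes> \<beta>2) = sig x \<beta>1 \<otimes> sig x \<beta>2"
      by (rule sig_eq[OF x]) (use P sig[OF x b1] sig[OF x b2] b1 b2 in simp_all)
  qed
  have inj: "inj_on (sig x) b"
  proof
    fix \<beta>1 \<beta>2 assume b1: "\<beta>1 \<in> b" and b2: "\<beta>2 \<in> b" and e: "sig x \<beta>1 = sig x \<beta>2"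
    have "inv (sig x \<beta>1 \<otimes> \<beta>1) \<otimes> (sig x \<beta>2 \<otimes> \<beta>2) \<in> x"
      using sig[OF x b1] sig[OF x b2] subgroup.m_closed[OF sx] subgroup.m_inv_closed[OF sx] by blast
    moreover have "inv (sig x \<beta>1 \<otimes> \<beta>1) \<otimes> (sig x \<beta>2 \<otimes> \<beta>2) = inv \<beta>1 \<otimes> \<beta>2"
      using e sig[OF x b1] b1 b2 by (simp add: inv_mult_group m_assoc)
    moreover have "inv \<beta>1 \<otimes> \<beta>2 \<in> b" using b1 b2 by simp
    ultimately have "inv \<beta>1 \<otimes> \<beta>2 \<in> x \<inter> b" by simp
    then have "inv \<beta>1 \<otimes> \<beta>2 = \<one>" using U_facts(4)[OF x] by blast
    then show "\<beta>1 = \<beta>2" using b1 b2 by (simp add: inv_mult_one)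
  qed
  have surj: "sig x ` b = a"
  proof
    show "sig x ` b \<subseteq> a" using sig[OF x] by blast
    show "a \<subseteq> sig x ` b"
    proof
      fix \<alpha> assume al: "\<alpha> \<in> a"
      obtain \<xi> \<beta> where e: "\<xi> \<in> x" "\<beta> \<in> b" "\<alpha> = \<xi> \<otimes> \<beta>" using U_facts(5)[OF x] al by fastforce
      have xc: "\<xi> \<in> carrier G" using e subgroup.mem_carrier[OF sx] by blast
      have "\<alpha> \<otimes> inv \<beta> = \<xi>" using e xc by (simp add: m_assoc)
      then have "sig x (inv \<beta>) = \<alpha>" by (intro sig_eq[OF x]) (use e al in simp_all)
      moreover have "inv \<beta> \<in> b" using e by simp
      ultimately show "\<alpha> \<in> sig x ` b" by (metis image_eqI)
    qed
  qed
  show ?thesis unfolding hb_def using hom inj surj by blast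
qed

definition graph where "graph f = {f \<beta> \<otimes> \<beta> | \<beta>. \<beta> \<in> b}"

lemma graphI: "\<beta> \<in> b \<Longrightarrow> z = f \<beta> \<otimes> \<beta> \<Longrightarrow> z \<in> graph f"
  unfolding graph_def by blast

lemma graphE: "z \<in> graph f \<Longrightarrow> \<exists>\<beta>\<in>b. z = f \<beta> \<otimes> \<beta>"
  unfolding graph_def by blast

lemma hb_basic:
  assumes h: "hb G b a f"
  shows "\<And>\<beta>. \<beta> \<in> b \<Longrightarrow> f \<beta> \<in> a"
    "\<And>\<beta>1 \<beta>2. \<beta>1 \<in> b \<Longrightarrow> \<beta>2 \<in> b \<Longrightarrow> f (\<beta>1 \<otimes> \<beta>2) = f \<beta>1 \<otimes> f \<beta>2"
    "f \<one> = \<one>"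
    "\<And>\<beta>. \<beta> \<in> b \<Longrightarrow> f (inv \<beta>) = inv (f \<beta>)"
    "\<And>\<beta>1 \<beta>2. \<beta>1 \<in> b \<Longrightarrow> \<beta>2 \<in> b \<Longrightarrow> f \<beta>1 = f \<beta>2 \<Longrightarrow> \<beta>1 = \<beta>2"
    "\<And>\<alpha>. \<alpha> \<in> a \<Longrightarrow> \<exists>\<beta>\<in>b. f \<beta> = \<alpha>"
proof -
  have im: "f ` b = a" and inj: "inj_on f b" and hm: "\<forall>x\<in>b. \<forall>y\<in>b. f (x \<otimes> y) = f x \<otimes> f y"
    using h unfolding hb_def by auto
  show fa: "\<And>\<beta>. \<beta> \<in> b \<Longrightarrow> f \<beta> \<in> a" using im by blast
  show fm: "\<And>\<beta>1 \<beta>2. \<beta>1 \<in> b \<Longrightarrow> \<beta>2 \<in> b \<Longrightarrow> f (\<beta>1 \<otimes> \<beta>2) = f \<beta>1 \<otimes> f \<beta>2" using hm by blast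
  have "f \<one> = f \<one> \<otimes> f \<one>" using fm[of \<one> \<one>] by simp
  then show f1: "f \<one> = \<one>" using fa[of \<one>] by simp
  show "\<And>\<beta>. \<beta> \<in> b \<Longrightarrow> f (inv \<beta>) = inv (f \<beta>)"
  proof -
    fix \<beta> assume be: "\<beta> \<in> b"
    have "f \<beta> \<otimes> f (inv \<beta>) = \<one>" using fm[of \<beta> "inv \<beta>"] be f1 by simp
    then have "f (inv \<beta>) = inv (f \<beta>) \<otimes> \<one>" using solve_l[of "f \<beta>" "f (inv \<beta>)" \<one>] be fa by simp
    then show "f (inv \<beta>) = inv (f \<beta>)" using be fa by simp
  qed
  show "\<And>\<beta>1 \<beta>2. \<beta>1 \<in> b \<Longrightarrow> \<beta>2 \<in> b \<Longrightarrow> f \<beta>1 = f \<beta>2 \<Longrightarrow> \<beta>1 = \<beta>2"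
    using inj inj_onD by metis
  show "\<And>\<alpha>. \<alpha> \<in> a \<Longrightarrow> \<exists>\<beta>\<in>b. f \<beta> = \<alpha>" using im by blast
qed

lemma graph_U:
  assumes h: "hb G b a f"
  shows "graph f \<in> U" "\<And>\<beta>. \<beta> \<in> b \<Longrightarrow> sig (graph f) \<beta> = f \<beta>"
proof -
  note F = hb_basic[OF h]
  have gc: "graph f \<subseteq> carrier G" using F(1) by (force dest: graphE)
  have sg: "subgroup (graph f) G"
  proof (rule subgroupI[OF gc])
    show "graph f \<noteq> {}" using graphI[OF b_one refl] by blast
  next
    fix z assume "z \<in> graph f"
    then obtain \<beta> where be: "\<beta> \<in> b" "z = f \<beta> \<otimes> \<beta>" by (blast dest: graphE)
    have "inv z = f (inv \<beta>) \<otimes> inv \<beta>" using be F(1,4) mix_inv by simp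
    then show "inv z \<in> graph f" using be by (intro graphI[of "inv \<beta>"]) simp_all
  next
    fix z1 z2 assume "z1 \<in> graph f" "z2 \<in> graph f"
    then obtain \<beta>1 \<beta>2 where be: "\<beta>1 \<in> b" "z1 = f \<beta>1 \<otimes> \<beta>1" "\<beta>2 \<in> b" "z2 = f \<beta>2 \<otimes> \<beta>2"
      by (blast dest: graphE)
    have "z1 \<otimes> z2 = f (\<beta>1 \<otimes> \<beta>2) \<otimes> (\<beta>1 \<otimes> \<beta>2)"
      using be mix[OF F(1)[OF be(1)] F(1)[OF be(3)] be(1) be(3)] F(2)[OF be(1) be(3)] by simp
    then show "z1 \<otimes> z2 \<in> graph f" using be by (intro graphI[of "\<beta>1 \<otimes> \<beta>2"]) simp_all
  qed
  have t1: "transv G a (graph f)"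
  proof -
    have "a \<inter> graph f \<subseteq> {\<one>}"
    proof
      fix z assume "z \<in> a \<inter> graph f"
      then obtain \<beta> where be: "z \<in> a" "\<beta> \<in> b" "z = f \<beta> \<otimes> \<beta>" by (blast dest: graphE)
      have "z \<otimes> \<one> = f \<beta> \<otimes> \<beta>" using be by simp
      then have "z = f \<beta> \<and> \<one> = \<beta>" by (rule decomp_uniq[OF be(1) F(1)[OF be(2)] b_one be(2)])
      then show "z \<in> {\<one>}" using F(3) by simp
    qed
    moreover have "\<forall>\<omega>\<in>carrier G. \<exists>\<xi>\<in>a. \<exists>\<eta>\<in>graph f. \<omega> = \<xi> \<otimes> \<eta>"
    proof
      fix \<omega> assume "\<omega> \<in> carrier G"
      then obtain \<alpha>0 \<beta>0 where e: "\<alpha>0 \<in> a" "\<beta>0 \<in> b" "\<omega> = \<alpha>0 \<otimes> \<beta>0" using decomp by blast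
      have "\<omega> = (\<alpha>0 \<otimes> inv (f \<beta>0)) \<otimes> (f \<beta>0 \<otimes> \<beta>0)" using e F(1) by (simp add: m_assoc)
      moreover have "\<alpha>0 \<otimes> inv (f \<beta>0) \<in> a" using e F(1) by simp
      moreover have "f \<beta>0 \<otimes> \<beta>0 \<in> graph f" using graphI[OF e(2) refl] .
      ultimately show "\<exists>\<xi>\<in>a. \<exists>\<eta>\<in>graph f. \<omega> = \<xi> \<otimes> \<eta>" by blast
    qed
    ultimately show ?thesis using transv_iff[OF sa sg] by blast
  qed
  have t2: "transv G (graph f) b"
  proof -
    have "graph f \<inter> b \<subseteq> {\<one>}"
    proof
      fix z assume "z \<in> graph f \<inter> b"
      then obtain \<beta> where be: "z \<in> b" "\<beta> \<in> b" "z = f \<beta> \<otimes> \<beta>" by (blast dest: graphE)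
      have "\<one> \<otimes> z = f \<beta> \<otimes> \<beta>" using be by simp
      then have "\<one> = f \<beta> \<and> z = \<beta>" by (rule decomp_uniq[OF a_one F(1)[OF be(2)] be(1) be(2)])
      then have "f \<beta> = f \<one> \<and> z = \<beta>" using F(3) by simp
      then have "\<beta> = \<one> \<and> z = \<beta>" using F(5)[of \<beta> \<one>] be by simp
      then show "z \<in> {\<one>}" by simp
    qed
    moreover have "\<forall>\<omega>\<in>carrier G. \<exists>\<xi>\<in>graph f. \<exists>\<eta>\<in>b. \<omega> = \<xi> \<otimes> \<eta>"
    proof
      fix \<omega> assume "\<omega> \<in> carrier G"
      then obtain \<alpha>0 \<beta>0 where e: "\<alpha>0 \<in> a" "\<beta>0 \<in> b" "\<omega> = \<alpha>0 \<otimes> \<beta>0" using decomp by blast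
      obtain \<beta>1 where b1: "\<beta>1 \<in> b" "f \<beta>1 = \<alpha>0" using F(6)[OF e(1)] by blast
      have "\<omega> = (f \<beta>1 \<otimes> \<beta>1) \<otimes> (inv \<beta>1 \<otimes> \<beta>0)" using e b1 F(1) by (simp add: m_assoc)
      moreover have "inv \<beta>1 \<otimes> \<beta>0 \<in> b" using e b1 by simp
      moreover have "f \<beta>1 \<otimes> \<beta>1 \<in> graph f" using graphI[OF b1(1) refl] .
      ultimately show "\<exists>\<xi>\<in>graph f. \<exists>\<eta>\<in>b. \<omega> = \<xi> \<otimes> \<eta>" by blast
    qed
    ultimately show ?thesis using transv_iff[OF sg sb] by blast
  qed
  show gU: "graph f \<in> U" unfolding U_def using sg t1 t2 by blast
  fix \<beta> assume be: "\<beta> \<in> b"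
  have "f \<beta> \<otimes> \<beta> \<in> graph f" using be by (intro graphI) simp_all
  then show "sig (graph f) \<beta> = f \<beta>" by (intro sig_eq[OF gU]) (use be F(1) in simp_all)
qed

lemma b_closed: "\<forall>x\<in>b. \<forall>y\<in>b. x \<otimes> y \<in> b" by simp

lemma sgi:
  assumes x: "x \<in> U"
  shows "\<And>\<alpha>. \<alpha> \<in> a \<Longrightarrow> inv_into b (sig x) \<alpha> \<in> b"
    "\<And>\<alpha>. \<alpha> \<in> a \<Longrightarrow> sig x (inv_into b (sig x) \<alpha>) = \<alpha>"
    "\<And>\<beta>. \<beta> \<in> b \<Longrightarrow> inv_into b (sig x) (sig x \<beta>) = \<beta>"
    "hb G a b (inv_into b (sig x))"
  using hb_inv_facts[OF sig_hb[OF x]] hb_inv[OF sig_hb[OF x] b_closed] by auto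

definition tri where "tri x y z = (\<lambda>\<beta>. sig x (inv_into b (sig y) (sig z \<beta>)))"

lemma tri_hb: "x \<in> U \<Longrightarrow> y \<in> U \<Longrightarrow> z \<in> U \<Longrightarrow> hb G b a (tri x y z)"
  unfolding tri_def by (rule hb_comp[OF hb_comp[OF sig_hb sgi(4)] sig_hb])

lemma gamma:
  assumes x: "x \<in> U" and y: "y \<in> U" and z: "z \<in> U"
  shows "Gamma G x a y b z = graph (tri x y z)"
proof
  show "Gamma G x a y b z \<subseteq> graph (tri x y z)"
  proof
    fix \<omega> assume "\<omega> \<in> Gamma G x a y b z"
    then obtain \<alpha> \<beta> where w: "\<omega> \<in> carrier G" and ab: "\<alpha> \<in> a" "\<beta> \<in> b"
      and h1: "\<alpha> \<otimes> \<omega> \<otimes> \<beta> \<in> y" and h2: "\<alpha> \<otimes> \<omega> \<in> z" and h3: "\<omega> \<otimes> \<beta> \<in> x"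
      unfolding Gamma_def by blast
    define \<alpha>0 where "\<alpha>0 = pa \<omega>"
    define \<beta>0 where "\<beta>0 = pb \<omega>"
    have a0: "\<alpha>0 \<in> a" and b0: "\<beta>0 \<in> b" and w0: "\<omega> = \<alpha>0 \<otimes> \<beta>0"
      using pab[OF w] unfolding \<alpha>0_def \<beta>0_def by auto
    have "\<alpha> \<otimes> \<omega> = (\<alpha> \<otimes> \<alpha>0) \<otimes> \<beta>0" using w0 ab a0 b0 by (simp add: m_assoc)
    then have e1: "sig z \<beta>0 = \<alpha> \<otimes> \<alpha>0" using h2 by (intro sig_eq[OF z b0]) (use ab a0 in simp_all)
    have "\<omega> \<otimes> \<beta> = \<alpha>0 \<otimes> (\<beta>0 \<otimes> \<beta>)" using w0 ab a0 b0 by (simp add: m_assoc)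
    then have e2: "sig x (\<beta>0 \<otimes> \<beta>) = \<alpha>0" using h3 by (intro sig_eq[OF x]) (use ab a0 b0 in simp_all)
    have "\<alpha> \<otimes> \<omega> \<otimes> \<beta> = (\<alpha> \<otimes> \<alpha>0) \<otimes> (\<beta>0 \<otimes> \<beta>)" using w0 ab a0 b0 by (simp add: m_assoc)
    then have e3: "sig y (\<beta>0 \<otimes> \<beta>) = \<alpha> \<otimes> \<alpha>0" using h1 by (intro sig_eq[OF y]) (use ab a0 b0 in simp_all)
    have "inv_into b (sig y) (sig z \<beta>0) = \<beta>0 \<otimes> \<beta>"
      using sgi(3)[OF y, of "\<beta>0 \<otimes> \<beta>"] e1 e3 ab b0 by simp
    then have "tri x y z \<beta>0 = \<alpha>0" unfolding tri_def using e2 by simp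
    then show "\<omega> \<in> graph (tri x y z)" using w0 by (intro graphI[OF b0]) simp
  qed
next
  show "graph (tri x y z) \<subseteq> Gamma G x a y b z"
  proof
    fix \<omega> assume "\<omega> \<in> graph (tri x y z)"
    then obtain \<beta>0 where b0: "\<beta>0 \<in> b" and w0: "\<omega> = tri x y z \<beta>0 \<otimes> \<beta>0" by (blast dest: graphE)
    define \<beta>1 where "\<beta>1 = inv_into b (sig y) (sig z \<beta>0)"
    have szb: "sig z \<beta>0 \<in> a" using sig[OF z b0] by simp
    have b1: "\<beta>1 \<in> b" unfolding \<beta>1_def using sgi(1)[OF y szb] .
    have sy: "sig y \<beta>1 = sig z \<beta>0" unfolding \<beta>1_def using sgi(2)[OF y szb] .
    have ft: "tri x y z \<beta>0 = sig x \<beta>1" unfolding tri_def \<beta>1_def by simp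
    have sxb: "sig x \<beta>1 \<in> a" using sig[OF x b1] by simp
    define \<alpha> where "\<alpha> = sig z \<beta>0 \<otimes> inv (sig x \<beta>1)"
    define \<beta> where "\<beta> = inv \<beta>0 \<otimes> \<beta>1"
    have al: "\<alpha> \<in> a" unfolding \<alpha>_def using szb sxb by simp
    have be: "\<beta> \<in> b" unfolding \<beta>_def using b0 b1 by simp
    have wc: "\<omega> \<in> carrier G" using w0 ft sxb b0 by simp
    have q1: "\<alpha> \<otimes> \<omega> = sig z \<beta>0 \<otimes> \<beta>0"
      unfolding \<alpha>_def w0 ft using szb sxb b0 by (simp add: m_assoc)
    have q2: "\<omega> \<otimes> \<beta> = sig x \<beta>1 \<otimes> \<beta>1"
      unfolding \<beta>_def w0 ft using b1 sxb b0 by (simp add: m_assoc)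
    have q3: "\<alpha> \<otimes> \<omega> \<otimes> \<beta> = sig y \<beta>1 \<otimes> \<beta>1"
      unfolding q1 \<beta>_def sy using b1 szb b0 by (simp add: m_assoc)
    have "\<alpha> \<otimes> \<omega> \<otimes> \<beta> \<in> y" unfolding q3 using sig[OF y b1] by simp
    moreover have "\<alpha> \<otimes> \<omega> \<in> z" unfolding q1 using sig[OF z b0] by simp
    moreover have "\<omega> \<otimes> \<beta> \<in> x" unfolding q2 using sig[OF x b1] by simp
    ultimately show "\<omega> \<in> Gamma G x a y b z" unfolding Gamma_def using wc al be by blast
  qed
qed

lemma gamma_U:
  assumes x: "x \<in> U" and y: "y \<in> U" and z: "z \<in> U"
  shows "Gamma G x a y b z \<in> U" "\<And>\<beta>. \<beta> \<in> b \<Longrightarrow> sig (Gamma G x a y b z) \<beta> = tri x y z \<beta>"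
  using gamma[OF x y z] graph_U[OF tri_hb[OF x y z]] by auto

lemma sgi_eq: "w \<in> U \<Longrightarrow> \<beta> \<in> b \<Longrightarrow> sig w \<beta> = \<alpha> \<Longrightarrow> inv_into b (sig w) \<alpha> = \<beta>"
  using sgi(3) by blast

lemma torsor_U:
  assumes c: "c \<in> U"
  shows "torsor U (\<lambda>x y z. Gamma G x a y b z)"
  unfolding torsor_def
proof (intro conjI ballI)
  show "U \<noteq> {}" using c by blast
next
  fix x y z assume "x \<in> U" "y \<in> U" "z \<in> U"
  then show "Gamma G x a y b z \<in> U" by (rule gamma_U)
next
  fix x y assume x: "x \<in> U" and y: "y \<in> U"
  show "Gamma G x a x b y = y"
  proof (rule U_ext[OF gamma_U(1)[OF x x y] y], intro ballI)
    fix \<beta> assume be: "\<beta> \<in> b"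
    have s: "sig y \<beta> \<in> a" using sig[OF y be] by simp
    show "sig (Gamma G x a x b y) \<beta> = sig y \<beta>"
      unfolding gamma_U(2)[OF x x y be] tri_def using sgi(2)[OF x s] .
  qed
  show "Gamma G x a y b y = x"
  proof (rule U_ext[OF gamma_U(1)[OF x y y] x], intro ballI)
    fix \<beta> assume be: "\<beta> \<in> b"
    show "sig (Gamma G x a y b y) \<beta> = sig x \<beta>"
      unfolding gamma_U(2)[OF x y y be] tri_def using sgi(3)[OF y be] by simp
  qed
next
  fix x y z u v assume x: "x \<in> U" and y: "y \<in> U" and z: "z \<in> U" and u: "u \<in> U" and v: "v \<in> U"
  have g1: "Gamma G x a y b z \<in> U" using gamma_U(1)[OF x y z] .
  have g2: "Gamma G z a u b v \<in> U" using gamma_U(1)[OF z u v] .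
  have g3: "Gamma G u a z b y \<in> U" using gamma_U(1)[OF u z y] .
  have L1: "Gamma G (Gamma G x a y b z) a u b v \<in> U" using gamma_U(1)[OF g1 u v] .
  have L2: "Gamma G x a y b (Gamma G z a u b v) \<in> U" using gamma_U(1)[OF x y g2] .
  have L3: "Gamma G x a (Gamma G u a z b y) b v \<in> U" using gamma_U(1)[OF x g3 v] .
  define K where "K = (\<lambda>\<beta>. sig x (inv_into b (sig y) (sig z (inv_into b (sig u) (sig v \<beta>)))))"
  have k1: "\<forall>\<beta>\<in>b. sig (Gamma G (Gamma G x a y b z) a u b v) \<beta> = K \<beta>"
  proof
    fix \<beta> assume be: "\<beta> \<in> b"
    have s1: "inv_into b (sig u) (sig v \<beta>) \<in> b" using sgi(1)[OF u] sig(1)[OF v be] .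
    show "sig (Gamma G (Gamma G x a y b z) a u b v) \<beta> = K \<beta>"
      unfolding gamma_U(2)[OF g1 u v be] tri_def gamma_U(2)[OF x y z s1] K_def by (simp add: tri_def)
  qed
  have k2: "\<forall>\<beta>\<in>b. sig (Gamma G x a y b (Gamma G z a u b v)) \<beta> = K \<beta>"
  proof
    fix \<beta> assume be: "\<beta> \<in> b"
    show "sig (Gamma G x a y b (Gamma G z a u b v)) \<beta> = K \<beta>"
      unfolding gamma_U(2)[OF x y g2 be] tri_def gamma_U(2)[OF z u v be] K_def by (simp add: tri_def)
  qed
  have k3: "\<forall>\<beta>\<in>b. sig (Gamma G x a (Gamma G u a z b y) b v) \<beta> = K \<beta>"
  proof
    fix \<beta> assume be: "\<beta> \<in> b"
    define \<alpha> where "\<alpha> = sig v \<beta>"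
    have al: "\<alpha> \<in> a" unfolding \<alpha>_def using sig(1)[OF v be] .
    define \<beta>' where "\<beta>' = inv_into b (sig y) (sig z (inv_into b (sig u) \<alpha>))"
    have i1: "inv_into b (sig u) \<alpha> \<in> b" using sgi(1)[OF u al] .
    have i2: "sig z (inv_into b (sig u) \<alpha>) \<in> a" using sig(1)[OF z i1] .
    have b': "\<beta>' \<in> b" unfolding \<beta>'_def using sgi(1)[OF y i2] .
    have "sig (Gamma G u a z b y) \<beta>' = sig u (inv_into b (sig z) (sig y \<beta>'))"
      unfolding gamma_U(2)[OF u z y b'] tri_def ..
    also have "\<dots> = sig u (inv_into b (sig z) (sig z (inv_into b (sig u) \<alpha>)))"
      unfolding \<beta>'_def sgi(2)[OF y i2] ..
    also have "\<dots> = \<alpha>" using sgi(3)[OF z i1] sgi(2)[OF u al] by simp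
    finally have "inv_into b (sig (Gamma G u a z b y)) \<alpha> = \<beta>'" by (rule sgi_eq[OF g3 b'])
    then show "sig (Gamma G x a (Gamma G u a z b y) b v) \<beta> = K \<beta>"
      unfolding gamma_U(2)[OF x g3 v be] tri_def K_def \<alpha>_def[symmetric] \<beta>'_def by simp
  qed
  show "Gamma G (Gamma G x a y b z) a u b v = Gamma G x a y b (Gamma G z a u b v)"
    using U_ext[OF L1 L2] k1 k2 by simp
  show "Gamma G x a y b (Gamma G z a u b v) = Gamma G x a (Gamma G u a z b y) b v"
    using U_ext[OF L2 L3] k2 k3 by simp
qed

lemma hb_auto:
  assumes h: "hb G a a f"
  shows "restrict f a \<in> auto (G\<lparr>carrier := a\<rparr>)"
proof -
  have im: "f ` a = a" and inj: "inj_on f a" and hm: "\<forall>x\<in>a. \<forall>y\<in>a. f (x \<otimes> y) = f x \<otimes> f y"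
    using h unfolding hb_def by auto
  have "restrict f a \<in> hom (G\<lparr>carrier := a\<rparr>) (G\<lparr>carrier := a\<rparr>)"
  proof (rule homI)
    fix x assume "x \<in> carrier (G\<lparr>carrier := a\<rparr>)"
    then show "restrict f a x \<in> carrier (G\<lparr>carrier := a\<rparr>)" using im by auto
  next
    fix x y assume "x \<in> carrier (G\<lparr>carrier := a\<rparr>)" "y \<in> carrier (G\<lparr>carrier := a\<rparr>)"
    then show "restrict f a (x \<otimes>\<^bsub>G\<lparr>carrier := a\<rparr>\<^esub> y) = restrict f a x \<otimes>\<^bsub>G\<lparr>carrier := a\<rparr>\<^esub> restrict f a y"
      using hm by simp
  qed
  moreover have "restrict f a \<in> Bij a"
    unfolding Bij_def using im inj by (simp add: bij_betw_def)
  ultimately show ?thesis unfolding auto_def by simp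
qed

lemma auto_hb:
  assumes h: "h \<in> auto (G\<lparr>carrier := a\<rparr>)"
  shows "hb G a a h" "h \<in> extensional a"
proof -
  have hh: "h \<in> hom (G\<lparr>carrier := a\<rparr>) (G\<lparr>carrier := a\<rparr>)" and hbij: "h \<in> Bij a"
    using h unfolding auto_def by auto
  have "\<forall>x\<in>a. \<forall>y\<in>a. h (x \<otimes> y) = h x \<otimes> h y"
    using hom_mult[OF hh] by simp
  then show "hb G a a h" using hbij unfolding hb_def Bij_def bij_betw_def by auto
  show "h \<in> extensional a" using hbij unfolding Bij_def by auto
qed

definition Psi where "Psi c x = restrict (\<lambda>\<alpha>. sig x (inv_into b (sig c) \<alpha>)) a"

lemma Psi_auto: "c \<in> U \<Longrightarrow> x \<in> U \<Longrightarrow> Psi c x \<in> auto (G\<lparr>carrier := a\<rparr>)"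
  unfolding Psi_def by (rule hb_auto[OF hb_comp[OF sgi(4) sig_hb]])

lemma iso_Aut:
  assumes c: "c \<in> U"
  shows "Psi c \<in> iso (torsor_group U (\<lambda>x y z. Gamma G x a y b z) c) (AutoGroup (G\<lparr>carrier := a\<rparr>))"
proof -
  have carA: "carrier (AutoGroup (G\<lparr>carrier := a\<rparr>)) = auto (G\<lparr>carrier := a\<rparr>)"
    by (simp add: AutoGroup_def)
  have multA: "\<And>f g. f \<in> auto (G\<lparr>carrier := a\<rparr>) \<Longrightarrow> g \<in> auto (G\<lparr>carrier := a\<rparr>) \<Longrightarrow>
      f \<otimes>\<^bsub>AutoGroup (G\<lparr>carrier := a\<rparr>)\<^esub> g = compose a f g"
    by (simp add: AutoGroup_def BijGroup_def auto_def)
  have carT: "carrier (torsor_group U (\<lambda>x y z. Gamma G x a y b z) c) = U"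
    by (simp add: torsor_group_def)
  have multT: "\<And>x z. x \<otimes>\<^bsub>torsor_group U (\<lambda>x y z. Gamma G x a y b z) c\<^esub> z = Gamma G x a c b z"
    by (simp add: torsor_group_def)
  have hom: "Psi c \<in> hom (torsor_group U (\<lambda>x y z. Gamma G x a y b z) c) (AutoGroup (G\<lparr>carrier := a\<rparr>))"
  proof (rule homI)
    fix x assume "x \<in> carrier (torsor_group U (\<lambda>x y z. Gamma G x a y b z) c)"
    then show "Psi c x \<in> carrier (AutoGroup (G\<lparr>carrier := a\<rparr>))" using Psi_auto[OF c] carT carA by simp
  next
    fix x z assume "x \<in> carrier (torsor_group U (\<lambda>x y z. Gamma G x a y b z) c)"
      "z \<in> carrier (torsor_group U (\<lambda>x y z. Gamma G x a y b z) c)"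
    then have x: "x \<in> U" and z: "z \<in> U" using carT by auto
    have "Psi c (Gamma G x a c b z) = compose a (Psi c x) (Psi c z)"
      unfolding Psi_def compose_def
    proof (rule restrict_ext)
      fix \<alpha> assume al: "\<alpha> \<in> a"
      have i1: "inv_into b (sig c) \<alpha> \<in> b" using sgi(1)[OF c al] .
      have i2: "sig z (inv_into b (sig c) \<alpha>) \<in> a" using sig(1)[OF z i1] .
      show "sig (Gamma G x a c b z) (inv_into b (sig c) \<alpha>) =
        restrict (\<lambda>\<alpha>. sig x (inv_into b (sig c) \<alpha>)) a (restrict (\<lambda>\<alpha>. sig z (inv_into b (sig c) \<alpha>)) a \<alpha>)"
        unfolding gamma_U(2)[OF x c z i1] tri_def using al i2 by simp
    qed
    then show "Psi c (x \<otimes>\<^bsub>torsor_group U (\<lambda>x y z. Gamma G x a y b z) c\<^esub> z) =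
        Psi c x \<otimes>\<^bsub>AutoGroup (G\<lparr>carrier := a\<rparr>)\<^esub> Psi c z"
      using multT multA[OF Psi_auto[OF c x] Psi_auto[OF c z]] by simp
  qed
  have inj: "inj_on (Psi c) U"
  proof
    fix x z assume x: "x \<in> U" and z: "z \<in> U" and e: "Psi c x = Psi c z"
    show "x = z"
    proof (rule U_ext[OF x z], intro ballI)
      fix \<beta> assume be: "\<beta> \<in> b"
      have s: "sig c \<beta> \<in> a" using sig(1)[OF c be] .
      have "Psi c x (sig c \<beta>) = Psi c z (sig c \<beta>)" using e by simp
      then show "sig x \<beta> = sig z \<beta>" unfolding Psi_def using s sgi(3)[OF c be] by simp
    qed
  qed
  have surj: "Psi c ` U = auto (G\<lparr>carrier := a\<rparr>)"
  proof
    show "Psi c ` U \<subseteq> auto (G\<lparr>carrier := a\<rparr>)" using Psi_auto[OF c] by blast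
    show "auto (G\<lparr>carrier := a\<rparr>) \<subseteq> Psi c ` U"
    proof
      fix h assume h: "h \<in> auto (G\<lparr>carrier := a\<rparr>)"
      have hb1: "hb G b a (\<lambda>\<beta>. h (sig c \<beta>))" by (rule hb_comp[OF sig_hb[OF c] auto_hb(1)[OF h]])
      define x where "x = graph (\<lambda>\<beta>. h (sig c \<beta>))"
      have xU: "x \<in> U" unfolding x_def using graph_U(1)[OF hb1] .
      have sx: "\<And>\<beta>. \<beta> \<in> b \<Longrightarrow> sig x \<beta> = h (sig c \<beta>)" unfolding x_def using graph_U(2)[OF hb1] .
      have "Psi c x = restrict h a"
        unfolding Psi_def
      proof (rule restrict_ext)
        fix \<alpha> assume al: "\<alpha> \<in> a"
        show "sig x (inv_into b (sig c) \<alpha>) = h \<alpha>"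
          using sx[OF sgi(1)[OF c al]] sgi(2)[OF c al] by simp
      qed
      also have "\<dots> = h" using extensional_restrict[OF auto_hb(2)[OF h]] .
      finally show "h \<in> Psi c ` U" using xU by (metis image_eqI)
    qed
  qed
  show ?thesis unfolding iso_def bij_betw_def using hom inj surj carT carA by simp
qed

lemma pa_a: "\<alpha> \<in> a \<Longrightarrow> pa \<alpha> = \<alpha> \<and> pb \<alpha> = \<one>"
  using pab_eq[of \<alpha> \<one>] by simp

lemma pb_b: "\<beta> \<in> b \<Longrightarrow> pa \<beta> = \<one> \<and> pb \<beta> = \<beta>"
  using pab_eq[of \<one> \<beta>] by simp

lemma pab_mult:
  assumes w1: "\<omega>1 \<in> carrier G" and w2: "\<omega>2 \<in> carrier G"
  shows "pa (\<omega>1 \<otimes> \<omega>2) = pa \<omega>1 \<otimes> pa \<omega>2" "pb (\<omega>1 \<otimes> \<omega>2) = pb \<omega>1 \<otimes> pb \<omega>2"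
proof -
  have "\<omega>1 \<otimes> \<omega>2 = (pa \<omega>1 \<otimes> pb \<omega>1) \<otimes> (pa \<omega>2 \<otimes> pb \<omega>2)" using pab(3)[OF w1] pab(3)[OF w2] by simp
  also have "\<dots> = (pa \<omega>1 \<otimes> pa \<omega>2) \<otimes> (pb \<omega>1 \<otimes> pb \<omega>2)"
    by (rule mix[OF pab(1)[OF w1] pab(1)[OF w2] pab(2)[OF w1] pab(2)[OF w2]])
  finally have e: "\<omega>1 \<otimes> \<omega>2 = (pa \<omega>1 \<otimes> pa \<omega>2) \<otimes> (pb \<omega>1 \<otimes> pb \<omega>2)" .
  have m: "pa \<omega>1 \<otimes> pa \<omega>2 \<in> a" "pb \<omega>1 \<otimes> pb \<omega>2 \<in> b" using pab w1 w2 by simp_all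
  show "pa (\<omega>1 \<otimes> \<omega>2) = pa \<omega>1 \<otimes> pa \<omega>2" "pb (\<omega>1 \<otimes> \<omega>2) = pb \<omega>1 \<otimes> pb \<omega>2"
    unfolding e using pab_eq[OF m] by simp_all
qed

lemma phi_exists:
  assumes c: "c \<in> U"
  shows "\<exists>\<phi>. \<phi> \<in> iso G (G\<lparr>carrier := a\<rparr> \<times>\<times> G\<lparr>carrier := a\<rparr>)
               \<and> \<phi> ` a = a \<times> {\<one>}
               \<and> \<phi> ` b = {\<one>} \<times> a
               \<and> \<phi> ` c = {(x, x) | x. x \<in> a}"
proof -
  define \<phi> where "\<phi> = (\<lambda>\<omega>. (pa \<omega>, sig c (pb \<omega>)))"
  note S = hb_basic[OF sig_hb[OF c]]
  have hom: "\<phi> \<in> hom G (G\<lparr>carrier := a\<rparr> \<times>\<times> G\<lparr>carrier := a\<rparr>)"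
  proof (rule homI)
    fix \<omega> assume w: "\<omega> \<in> carrier G"
    show "\<phi> \<omega> \<in> carrier (G\<lparr>carrier := a\<rparr> \<times>\<times> G\<lparr>carrier := a\<rparr>)"
      unfolding \<phi>_def using pab(1)[OF w] S(1)[OF pab(2)[OF w]] by simp
  next
    fix \<omega>1 \<omega>2 assume w1: "\<omega>1 \<in> carrier G" and w2: "\<omega>2 \<in> carrier G"
    show "\<phi> (\<omega>1 \<otimes> \<omega>2) = \<phi> \<omega>1 \<otimes>\<^bsub>G\<lparr>carrier := a\<rparr> \<times>\<times> G\<lparr>carrier := a\<rparr>\<^esub> \<phi> \<omega>2"
      unfolding \<phi>_def using pab_mult[OF w1 w2] S(2)[OF pab(2)[OF w1] pab(2)[OF w2]] by simp
  qed
  have inj: "inj_on \<phi> (carrier G)"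
  proof
    fix \<omega>1 \<omega>2 assume w1: "\<omega>1 \<in> carrier G" and w2: "\<omega>2 \<in> carrier G" and e: "\<phi> \<omega>1 = \<phi> \<omega>2"
    have e1: "pa \<omega>1 = pa \<omega>2" using e unfolding \<phi>_def by simp
    have "sig c (pb \<omega>1) = sig c (pb \<omega>2)" using e unfolding \<phi>_def by simp
    then have e2: "pb \<omega>1 = pb \<omega>2" using S(5) pab(2)[OF w1] pab(2)[OF w2] by blast
    show "\<omega>1 = \<omega>2" using pab(3)[OF w1] pab(3)[OF w2] e1 e2 by metis
  qed
  have surj: "\<phi> ` carrier G = a \<times> a"
  proof
    show "\<phi> ` carrier G \<subseteq> a \<times> a" using hom_carrier[OF hom] by simp
    show "a \<times> a \<subseteq> \<phi> ` carrier G"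
    proof
      fix pq assume "pq \<in> a \<times> a"
      then obtain p q where pq: "pq = (p, q)" "p \<in> a" "q \<in> a" by blast
      have i: "inv_into b (sig c) q \<in> b" using sgi(1)[OF c pq(3)] .
      have "\<phi> (p \<otimes> inv_into b (sig c) q) = (p, q)"
        unfolding \<phi>_def using pab_eq[OF pq(2) i] sgi(2)[OF c pq(3)] by simp
      moreover have "p \<otimes> inv_into b (sig c) q \<in> carrier G" using pq i by simp
      ultimately show "pq \<in> \<phi> ` carrier G" using pq(1) by (metis image_eqI)
    qed
  qed
  have iso: "\<phi> \<in> iso G (G\<lparr>carrier := a\<rparr> \<times>\<times> G\<lparr>carrier := a\<rparr>)"
    unfolding iso_def bij_betw_def using hom inj surj by simp
  have fa: "\<phi> ` a = a \<times> {\<one>}"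
  proof -
    have "\<And>\<alpha>. \<alpha> \<in> a \<Longrightarrow> \<phi> \<alpha> = (\<alpha>, \<one>)" unfolding \<phi>_def using pa_a S(3) by simp
    then show ?thesis by force
  qed
  have fb: "\<phi> ` b = {\<one>} \<times> a"
  proof -
    have e: "\<And>\<beta>. \<beta> \<in> b \<Longrightarrow> \<phi> \<beta> = (\<one>, sig c \<beta>)" unfolding \<phi>_def using pb_b by simp
    show ?thesis
    proof
      show "\<phi> ` b \<subseteq> {\<one>} \<times> a" using e S(1) by auto
      show "{\<one>} \<times> a \<subseteq> \<phi> ` b"
      proof
        fix pq assume "pq \<in> {\<one>} \<times> a"
        then obtain q where q: "pq = (\<one>, q)" "q \<in> a" by blast
        have "\<phi> (inv_into b (sig c) q) = pq" using e[OF sgi(1)[OF c q(2)]] sgi(2)[OF c q(2)] q(1) by simp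
        then show "pq \<in> \<phi> ` b" using sgi(1)[OF c q(2)] by (metis image_eqI)
      qed
    qed
  qed
  have fc: "\<phi> ` c = {(x, x) | x. x \<in> a}"
  proof
    show "\<phi> ` c \<subseteq> {(x, x) | x. x \<in> a}"
    proof
      fix pq assume "pq \<in> \<phi> ` c"
      then obtain \<gamma> where g: "\<gamma> \<in> c" "pq = \<phi> \<gamma>" by blast
      obtain \<beta> where be: "\<beta> \<in> b" "\<gamma> = sig c \<beta> \<otimes> \<beta>" using x_graph[OF c g(1)] by blast
      have s: "sig c \<beta> \<in> a" using sig(1)[OF c be(1)] .
      have "\<phi> \<gamma> = (sig c \<beta>, sig c \<beta>)" unfolding \<phi>_def be(2) using pab_eq[OF s be(1)] by simp
      then show "pq \<in> {(x, x) | x. x \<in> a}" using g s by blast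
    qed
    show "{(x, x) | x. x \<in> a} \<subseteq> \<phi> ` c"
    proof
      fix pq assume "pq \<in> {(x, x) | x. x \<in> a}"
      then obtain q where q: "pq = (q, q)" "q \<in> a" by blast
      define \<beta> where "\<beta> = inv_into b (sig c) q"
      have be: "\<beta> \<in> b" unfolding \<beta>_def using sgi(1)[OF c q(2)] .
      have sb': "sig c \<beta> = q" unfolding \<beta>_def using sgi(2)[OF c q(2)] .
      have inc: "q \<otimes> \<beta> \<in> c" using sig(2)[OF c be] sb' by simp
      have "\<phi> (q \<otimes> \<beta>) = pq" unfolding \<phi>_def using pab_eq[OF q(2) be] sb' q(1) by simp
      then show "pq \<in> \<phi> ` c" using inc by (metis image_eqI)
    qed
  qed
  show ?thesis using iso fa fb fc by blast
qed

end

theorem theorem4p6: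
  fixes G (structure)
  fixes a b c :: "'g set"
  assumes "group G"
    and "subgroup a G" and "subgroup b G" and "subgroup c G"
    and "transv G a b"
    and "\<forall>\<alpha>\<in>a. \<forall>\<beta>\<in>b. \<alpha> \<otimes> \<beta> = \<beta> \<otimes> \<alpha>"
  shows "((transv G b c \<and> transv G c a) \<longleftrightarrow>
           (\<exists>\<phi>. \<phi> \<in> iso G (G\<lparr>carrier := a\<rparr> \<times>\<times> G\<lparr>carrier := a\<rparr>)
               \<and> \<phi> ` a = a \<times> {\<one>}
               \<and> \<phi> ` b = {\<one>} \<times> a
               \<and> \<phi> ` c = {(x, x) | x. x \<in> a}))
         \<and> (transv G b c \<and> transv G c a \<longrightarrow>
           torsor (Uab G a b \<inter> Gras G) (Ulaw G a b)
           \<and> torsor_group (Uab G a b \<inter> Gras G) (Ulaw G a b) c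
               \<cong> AutoGroup (G\<lparr>carrier := a\<rparr>))"
proof -
  have tw: "twosub G a b" unfolding twosub_def twosub_axioms_def using assms by simp
  interpret T: twosub G a b by (rule tw)
  have UU: "Uab G a b \<inter> Gras G = T.U"
  proof (intro equalityI subsetI)
    fix x assume "x \<in> Uab G a b \<inter> Gras G"
    then show "x \<in> T.U" unfolding Uab_def Gras_def T.U_def by auto
  next
    fix x assume "x \<in> T.U"
    then show "x \<in> Uab G a b \<inter> Gras G" unfolding Uab_def Gras_def T.U_def using subgroup.subset[of x G] by auto
  qed
  have law: "Ulaw G a b = (\<lambda>x y z. Gamma G x a y b z)"
    by (intro ext) (simp add: Ulaw_def)
  have cU: "transv G b c \<and> transv G c a \<Longrightarrow> c \<in> T.U"
  proof -
    assume h: "transv G b c \<and> transv G c a"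
    have "transv G a c" using T.transv_sym[OF assms(4) assms(2) conjunct2[OF h]] .
    moreover have "transv G c b" using T.transv_sym[OF assms(3) assms(4) conjunct1[OF h]] .
    ultimately show "c \<in> T.U" unfolding T.U_def using assms(4) by simp
  qed
  have P1: "(transv G b c \<and> transv G c a) \<longleftrightarrow>
           (\<exists>\<phi>. \<phi> \<in> iso G (G\<lparr>carrier := a\<rparr> \<times>\<times> G\<lparr>carrier := a\<rparr>)
               \<and> \<phi> ` a = a \<times> {\<one>}
               \<and> \<phi> ` b = {\<one>} \<times> a
               \<and> \<phi> ` c = {(x, x) | x. x \<in> a})"
  proof
    assume "transv G b c \<and> transv G c a"
    then show "\<exists>\<phi>. \<phi> \<in> iso G (G\<lparr>carrier := a\<rparr> \<times>\<times> G\<lparr>carrier := a\<rparr>)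
               \<and> \<phi> ` a = a \<times> {\<one>}
               \<and> \<phi> ` b = {\<one>} \<times> a
               \<and> \<phi> ` c = {(x, x) | x. x \<in> a}" by (rule T.phi_exists[OF cU])
  next
    assume "\<exists>\<phi>. \<phi> \<in> iso G (G\<lparr>carrier := a\<rparr> \<times>\<times> G\<lparr>carrier := a\<rparr>)
               \<and> \<phi> ` a = a \<times> {\<one>}
               \<and> \<phi> ` b = {\<one>} \<times> a
               \<and> \<phi> ` c = {(x, x) | x. x \<in> a}"
    then obtain \<phi> where H: "\<phi> \<in> iso G (G\<lparr>carrier := a\<rparr> \<times>\<times> G\<lparr>carrier := a\<rparr>)
               \<and> \<phi> ` a = a \<times> {\<one>}
               \<and> \<phi> ` b = {\<one>} \<times> a
               \<and> \<phi> ` c = {(x, x) | x. x \<in> a}" by (elim exE)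
    note H1 = conjunct1[OF H] and H2 = conjunct1[OF conjunct2[OF H]]
      and H3 = conjunct1[OF conjunct2[OF conjunct2[OF H]]] and H4 = conjunct2[OF conjunct2[OF conjunct2[OF H]]]
    show "transv G b c \<and> transv G c a"
      by (rule T.converse_dir[OF assms(2) assms(3) assms(4) H1 H2 H3 H4])
  qed
  have P2: "transv G b c \<and> transv G c a \<longrightarrow>
           torsor (Uab G a b \<inter> Gras G) (Ulaw G a b)
           \<and> torsor_group (Uab G a b \<inter> Gras G) (Ulaw G a b) c
               \<cong> AutoGroup (G\<lparr>carrier := a\<rparr>)"
  proof
    assume "transv G b c \<and> transv G c a"
    then have c: "c \<in> T.U" by (rule cU)
    show "torsor (Uab G a b \<inter> Gras G) (Ulaw G a b)
           \<and> torsor_group (Uab G a b \<inter> Gras G) (Ulaw G a b) c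
               \<cong> AutoGroup (G\<lparr>carrier := a\<rparr>)"
      unfolding UU law by (rule conjI[OF T.torsor_U[OF c] is_isoI[OF T.iso_Aut[OF c]]])
  qed
  show ?thesis by (rule conjI[OF P1 P2])
qed

end
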